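(* Let $\mathcal{G}=(\mathcal{V},\mathcal{E})$ be a directed graph with terminals $s,t$ and $f:2^{\mathcal{E}}\to\mathbb{R}_+$ normalized, monotone nondecreasing and submodular. Let $\widehat C$ be an $(s,t)$-cut minimizing $\hat f_{\mathrm{pf}}$, and let $C^*$ be a minimal $(s,t)$-cut minimizing $f$. Let $\Delta_s=\{v: \exists (v,u)\in C^*\}$ and $\Delta_t=\{v:\exists (u,v)\in C^*\}$. Then $$f(\widehat C)\le \min\{|\Delta_s|,|\Delta_t|\}\,f(C^* )\le \frac{|\mathcal{V}|}{2}f(C^* ).$$
   Context: An $(s,t)$-cut is a set of edges whose removal disconnects all $s$-$t$ paths; it is minimal if no proper subset is an $(s,t)$-cut. For $C\subseteq\mathcal{E}$, let $\mathcal{P}_C$ be the family of all partitions $\{C^\Pi_v\}_{v\in\mathcal{V}}$ of $C$ obtained by assigning each edge $(u,w)\in C$ either to its tail $u$ or to its head $w$ ($C^\Pi_v$ = edges assigned to $v$, possibly empty), and $\hat f_{\mathrm{pf}}(C)=\min_{\Pi(C)\in\mathcal{P}_C}\sum_{v\in\mathcal{V}}f(C^\Pi_v)$. *)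

theory Defs
  imports Complex_Main
begin

definition st_cut :: "('a \<times> 'a) set \<Rightarrow> 'a \<Rightarrow> 'a \<Rightarrow> ('a \<times> 'a) set \<Rightarrow> bool" where
  "st_cut E s t C \<longleftrightarrow> C \<subseteq> E \<and> (s, t) \<notin> (E - C)\<^sup>*"

definition minimal_st_cut :: "('a \<times> 'a) set \<Rightarrow> 'a \<Rightarrow> 'a \<Rightarrow> ('a \<times> 'a) set \<Rightarrow> bool" where
  "minimal_st_cut E s t C \<longleftrightarrow> st_cut E s t C \<and> (\<forall>D. D \<subset> C \<longrightarrow> \<not> st_cut E s t D)"

definition normalized :: "('e set \<Rightarrow> real) \<Rightarrow> bool" where
  "normalized f \<longleftrightarrow> f {} = 0"

definition monotone_on_subsets :: "'e set \<Rightarrow> ('e set \<Rightarrow> real) \<Rightarrow> bool" where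
  "monotone_on_subsets E f \<longleftrightarrow> (\<forall>A B. A \<subseteq> B \<and> B \<subseteq> E \<longrightarrow> f A \<le> f B)"

definition submodular_on :: "'e set \<Rightarrow> ('e set \<Rightarrow> real) \<Rightarrow> bool" where
  "submodular_on E f \<longleftrightarrow>
     (\<forall>A B. A \<subseteq> E \<and> B \<subseteq> E \<longrightarrow> f (A \<union> B) + f (A \<inter> B) \<le> f A + f B)"

text \<open>Assignments of each edge of C to its tail or its head; the partition
  class of v is the set of edges assigned to v.\<close>

definition edge_assignments :: "('a \<times> 'a) set \<Rightarrow> (('a \<times> 'a) \<Rightarrow> 'a) set" where
  "edge_assignments C = {g. (\<forall>e\<in>C. g e = fst e \<or> g e = snd e) \<and> (\<forall>e. e \<notin> C \<longrightarrow> g e = undefined)}"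

definition f_pf :: "'a set \<Rightarrow> (('a \<times> 'a) set \<Rightarrow> real) \<Rightarrow> ('a \<times> 'a) set \<Rightarrow> real" where
  "f_pf V f C = Min ((\<lambda>g. \<Sum>v\<in>V. f {e\<in>C. g e = v}) ` edge_assignments C)"

end

theory Submission
  imports Defs "HOL-Library.FuncSet"
begin

lemma ea_PiE: "edge_assignments C = PiE C (\<lambda>e. {fst e, snd e})"
  unfolding edge_assignments_def PiE_def Pi_def extensional_def
  apply (rule set_eqI) apply (simp only: mem_Collect_eq Int_iff insert_iff singleton_iff empty_iff) by meson

lemma ea_finite: "finite C \<Longrightarrow> finite (edge_assignments C)"
  unfolding ea_PiE by (rule finite_PiE) auto

lemma subadd_union:
  assumes fin: "finite S" and norm: "f {} = 0" and nn: "\<forall>A. A \<subseteq> E \<longrightarrow> 0 \<le> f A"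
    and sub: "submodular_on E f" and AE: "\<forall>v\<in>S. A v \<subseteq> E"
  shows "f (\<Union>v\<in>S. A v) \<le> (\<Sum>v\<in>S. f (A v))"
  using fin AE
proof (induction S rule: finite_induct)
  case empty then show ?case using norm by simp
next
  case (insert x F)
  let ?U = "\<Union>v\<in>F. A v"
  have UE: "?U \<subseteq> E" using insert.prems by auto
  have xE: "A x \<subseteq> E" using insert.prems by auto
  have "f (A x \<union> ?U) + f (A x \<inter> ?U) \<le> f (A x) + f ?U"
    using sub UE xE unfolding submodular_on_def by blast
  moreover have "0 \<le> f (A x \<inter> ?U)" using nn xE by blast
  moreover have "f ?U \<le> (\<Sum>v\<in>F. f (A v))" using insert by auto
  ultimately show ?case using insert.hyps by simp
qed

lemma f_le_pf_sum:
  assumes finV: "finite V" and EV: "E \<subseteq> V \<times> V" and CE: "C \<subseteq> E"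
    and norm: "f {} = 0" and nn: "\<forall>A. A \<subseteq> E \<longrightarrow> 0 \<le> f A"
    and sub: "submodular_on E f" and g: "g \<in> edge_assignments C"
  shows "f C \<le> (\<Sum>v\<in>V. f {e\<in>C. g e = v})"
proof -
  have "C = (\<Union>v\<in>V. {e\<in>C. g e = v})"
  proof
    show "C \<subseteq> (\<Union>v\<in>V. {e\<in>C. g e = v})"
    proof
      fix e assume e: "e \<in> C"
      then have "e \<in> V \<times> V" using CE EV by auto
      moreover have "g e = fst e \<or> g e = snd e" using g e unfolding edge_assignments_def by auto
      ultimately have "g e \<in> V" by auto
      then show "e \<in> (\<Union>v\<in>V. {e\<in>C. g e = v})" using e by auto
    qed
  qed auto
  moreover have "f (\<Union>v\<in>V. {e\<in>C. g e = v}) \<le> (\<Sum>v\<in>V. f {e\<in>C. g e = v})"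
    by (rule subadd_union[OF finV norm nn sub]) (use CE in auto)
  ultimately show ?thesis by simp
qed

lemma pf_bound:
  assumes finV: "finite V" and EV: "E \<subseteq> V \<times> V" and CE: "C \<subseteq> E"
    and norm: "f {} = 0" and nn: "\<forall>A. A \<subseteq> E \<longrightarrow> 0 \<le> f A"
    and mono: "monotone_on_subsets E f"
    and h: "\<forall>e. h e = fst e \<or> h e = snd e"
  shows "f_pf V f C \<le> real (card {v. \<exists>e\<in>C. h e = v}) * f C"
proof -
  define D where "D = {v. \<exists>e\<in>C. h e = v}"
  let ?g = "\<lambda>e. if e \<in> C then h e else undefined"
  have g: "?g \<in> edge_assignments C" using h unfolding edge_assignments_def by (simp del: split_paired_All)
  have finC: "finite C" by (rule finite_subset[OF _ finite_cartesian_product[OF finV finV]]) (use CE EV in blast)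
  have "f_pf V f C \<le> (\<Sum>v\<in>V. f {e\<in>C. ?g e = v})"
    unfolding f_pf_def by (rule Min_le[OF finite_imageI[OF ea_finite[OF finC]] imageI[OF g]])
  also have "\<dots> \<le> (\<Sum>v\<in>V. if v \<in> D then f C else 0)"
  proof (rule sum_mono)
    fix v assume "v \<in> V"
    show "f {e\<in>C. ?g e = v} \<le> (if v \<in> D then f C else 0)"
    proof (cases "v \<in> D")
      case True
      have "{e\<in>C. ?g e = v} \<subseteq> C" by blast
      then have "f {e\<in>C. ?g e = v} \<le> f C" using mono CE unfolding monotone_on_subsets_def by blast
      then show ?thesis using True by simp
    next
      case False
      then have E0: "{e\<in>C. ?g e = v} = {}" unfolding D_def by auto
      have "f {e\<in>C. ?g e = v} = 0" by (simp only: E0 norm)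
      then show ?thesis using False by (simp only: if_False order_refl)
    qed
  qed
  also have "\<dots> = (\<Sum>v\<in>V \<inter> D. f C)"
    by (simp only: sum.If_cases[OF finV] sum.neutral_const add_0_right Collect_mem_eq)
  also have "V \<inter> D = D"
  proof -
    have "D \<subseteq> V"
    proof
      fix v assume "v \<in> D"
      then obtain e where e: "e \<in> C" "h e = v" unfolding D_def by blast
      then have "e \<in> V \<times> V" using CE EV by blast
      then show "v \<in> V" using h e by (metis mem_Times_iff)
    qed
    then show ?thesis by blast
  qed
  finally show ?thesis unfolding D_def by simp
qed

theorem theorem3:
  fixes V :: "'a set" and E :: "('a \<times> 'a) set" and s t :: 'a
    and f :: "('a \<times> 'a) set \<Rightarrow> real"
    and C_hat C_star :: "('a \<times> 'a) set"
  assumes finV: "finite V" and EV: "E \<subseteq> V \<times> V"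
    and sV: "s \<in> V" and tV: "t \<in> V"
    and f_nonneg: "\<forall>A. A \<subseteq> E \<longrightarrow> 0 \<le> f A"
    and f_norm: "normalized f"
    and f_mono: "monotone_on_subsets E f"
    and f_sub: "submodular_on E f"
    and hat_cut: "st_cut E s t C_hat"
    and hat_opt: "\<forall>C. st_cut E s t C \<longrightarrow> f_pf V f C_hat \<le> f_pf V f C"
    and star_min: "minimal_st_cut E s t C_star"
    and star_opt: "\<forall>C. st_cut E s t C \<longrightarrow> f C_star \<le> f C"
  shows "f C_hat \<le> real (min (card {v. \<exists>u. (v, u) \<in> C_star}) (card {v. \<exists>u. (u, v) \<in> C_star}))
                      * f C_star
       \<and> real (min (card {v. \<exists>u. (v, u) \<in> C_star}) (card {v. \<exists>u. (u, v) \<in> C_star})) * f C_star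
           \<le> real (card V) / 2 * f C_star"
proof -
  have norm: "f {} = 0" using f_norm unfolding normalized_def .
  have hatE: "C_hat \<subseteq> E" using hat_cut unfolding st_cut_def by auto
  have starcut: "st_cut E s t C_star" using star_min unfolding minimal_st_cut_def by auto
  have starE: "C_star \<subseteq> E" using starcut unfolding st_cut_def by auto
  have fin_hat: "finite C_hat" using finite_subset[OF _ finite_cartesian_product[OF finV finV]] hatE EV by blast
  obtain g where g: "g \<in> edge_assignments C_hat"
      and gmin: "f_pf V f C_hat = (\<Sum>v\<in>V. f {e\<in>C_hat. g e = v})"
  proof -
    let ?g0 = "\<lambda>e. if e \<in> C_hat then fst e else undefined"
    have "?g0 \<in> edge_assignments C_hat" unfolding edge_assignments_def by auto
    then have ne: "(\<lambda>g. \<Sum>v\<in>V. f {e\<in>C_hat. g e = v}) ` edge_assignments C_hat \<noteq> {}" by blast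
    have "f_pf V f C_hat \<in> (\<lambda>g. \<Sum>v\<in>V. f {e\<in>C_hat. g e = v}) ` edge_assignments C_hat"
      unfolding f_pf_def by (rule Min_in) (use ea_finite[OF fin_hat] ne in auto)
    then show ?thesis using that by blast
  qed
  have h1: "f C_hat \<le> f_pf V f C_hat"
    using f_le_pf_sum[OF finV EV hatE norm f_nonneg f_sub g] gmin by simp
  have h2: "f_pf V f C_hat \<le> f_pf V f C_star" using hat_opt starcut by blast
  have Ds: "{v. \<exists>e\<in>C_star. fst e = v} = {v. \<exists>u. (v, u) \<in> C_star}" by force
  have Dt: "{v. \<exists>e\<in>C_star. snd e = v} = {v. \<exists>u. (u, v) \<in> C_star}" by force
  have b1: "f_pf V f C_star \<le> real (card {v. \<exists>u. (v, u) \<in> C_star}) * f C_star"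
    using pf_bound[OF finV EV starE norm f_nonneg f_mono, of fst] Ds by simp
  have b2: "f_pf V f C_star \<le> real (card {v. \<exists>u. (u, v) \<in> C_star}) * f C_star"
    using pf_bound[OF finV EV starE norm f_nonneg f_mono, of snd] Dt by simp
  have part1: "f C_hat \<le> real (min (card {v. \<exists>u. (v, u) \<in> C_star}) (card {v. \<exists>u. (u, v) \<in> C_star})) * f C_star"
    using h1 h2 b1 b2 by (simp add: min_def)
  let ?R = "E - C_star"
  have reach: "(s, u) \<in> ?R\<^sup>* \<and> (w, t) \<in> ?R\<^sup>*" if uw: "(u, w) \<in> C_star" for u w
  proof -
    have notst: "(s, t) \<notin> ?R\<^sup>*" using starcut unfolding st_cut_def by auto
    have "\<not> st_cut E s t (C_star - {(u, w)})"
      using star_min uw unfolding minimal_st_cut_def by blast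
    then have "(s, t) \<in> (E - (C_star - {(u, w)}))\<^sup>*"
      using starE unfolding st_cut_def by auto
    moreover have "E - (C_star - {(u, w)}) = insert (u, w) ?R" using uw starE by auto
    ultimately have "(s, t) \<in> ?R\<^sup>* \<union> {(x, y). (x, u) \<in> ?R\<^sup>* \<and> (w, y) \<in> ?R\<^sup>*}"
      by (simp only: rtrancl_insert)
    then show ?thesis using notst by auto
  qed
  let ?Ds = "{v. \<exists>u. (v, u) \<in> C_star}" and ?Dt = "{v. \<exists>u. (u, v) \<in> C_star}"
  have disj: "?Ds \<inter> ?Dt = {}"
  proof (rule ccontr)
    assume "?Ds \<inter> ?Dt \<noteq> {}"
    then obtain v a b where "(v, a) \<in> C_star" "(b, v) \<in> C_star" by auto
    then have "(s, v) \<in> ?R\<^sup>*" "(v, t) \<in> ?R\<^sup>*" using reach by blast+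
    then have "(s, t) \<in> ?R\<^sup>*" by auto
    then show False using starcut unfolding st_cut_def by auto
  qed
  have sub: "?Ds \<union> ?Dt \<subseteq> V" using starE EV by auto
  have "card ?Ds + card ?Dt \<le> card V"
  proof -
    have fD: "finite ?Ds" "finite ?Dt" using sub finV finite_subset by auto
    have "card ?Ds + card ?Dt = card (?Ds \<union> ?Dt)" using card_Un_disjoint[OF fD disj] by simp
    also have "\<dots> \<le> card V" using card_mono[OF finV sub] .
    finally show ?thesis .
  qed
  then have mle: "real (min (card ?Ds) (card ?Dt)) \<le> real (card V) / 2" by (simp add: min_def)
  have "0 \<le> f C_star" using f_nonneg starE by blast
  then have "real (min (card ?Ds) (card ?Dt)) * f C_star \<le> real (card V) / 2 * f C_star"
    using mle by (rule mult_right_mono[rotated])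
  with part1 show ?thesis by blast
qed

end
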